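(* Let $\mathcal P$ be the set of STL formulae, let $\mathcal T$ be a trajectory space which is bounded in the supremum norm, let $I\subset\mathbb R_{\ge 0}$ be a bounded interval, and let $\mu_0$ be a probability measure on $\mathcal T$. Define $k':\mathcal P\times\mathcal P\to\mathbb R$ by $$k'(\varphi,\psi)=\int_{\xi\in\mathcal T}\int_{t\in I}\rho(\varphi,\xi,t)\,\rho(\psi,\xi,t)\,dt\,d\mu_0(\xi).$$ Then $k'$ is a proper kernel function: there exist a Hilbert space $\mathbb H$ and a map $\Phi:\mathcal P\to\mathbb H$ such that $k'(\varphi,\psi)=\langle\Phi(\varphi),\Phi(\psi)\rangle_{\mathbb H}$ for all $\varphi,\psi\in\mathcal P$.
   Context: Trajectories are continuous functions $\xi:\mathbb R_{\ge0}\to\mathbb R^n$ (for a fixed $n$). The trajectory space $\mathcal T$ is a set of such functions, and it is bounded in the supremum norm: there is $B\in\mathbb R$ with $\sup_t\|\xi(t)\|\le B$ for all $\xi\in\mathcal T$. The probability measure $\mu_0$ is defined on a $\sigma$-algebra on $\mathcal T$ for which $(\xi,t)\mapsto\rho(\varphi,\xi,t)$ is measurable for every formula $\varphi$. STL formulae are generated by $\varphi ::= tt \mid \pi \mid \neg\varphi \mid \varphi_1\wedge\varphi_2 \mid \varphi_1\,\mathbf U_{[a,b]}\,\varphi_2$ with $a<b$ rationals, where an atomic predicate $\pi$ has the form $f_\pi(x_1,\dots,x_n)\ge 0$ for a continuous function $f_\pi:\mathbb R^n\to\mathbb R$. The robustness $\rho(\varphi,\xi,t)$ is defined recursively: $\rho(\pi,\xi,t)=f_\pi(\xi(t))$;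 $\rho(\neg\varphi,\xi,t)=-\rho(\varphi,\xi,t)$; $\rho(\varphi_1\wedge\varphi_2,\xi,t)=\min(\rho(\varphi_1,\xi,t),\rho(\varphi_2,\xi,t))$; $\rho(\varphi_1\mathbf U_{[a,b]}\varphi_2,\xi,t)=\max_{t'\in[a+t,b+t]}\min\big(\rho(\varphi_2,\xi,t'),\min_{t''\in[t,t']}\rho(\varphi_1,\xi,t'')\big)$ (the robustness of $tt$ is a fixed positive constant). *)

theory Defs
  imports "HOL-Probability.Probability"
begin

text \<open>STL formulae over trajectories in R^n (n given by the finite index type 'n).
  Atomic predicate Atom f stands for f(x) >= 0.\<close>
datatype 'n stl =
    TT
  | Atom "real^'n \<Rightarrow> real"
  | Neg "'n stl"
  | And "'n stl" "'n stl"
  | Until rat rat "'n stl" "'n stl"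

fun wf_stl :: "('n::finite) stl \<Rightarrow> bool" where
  "wf_stl TT = True"
| "wf_stl (Atom f) = continuous_on UNIV f"
| "wf_stl (Neg \<phi>) = wf_stl \<phi>"
| "wf_stl (And \<phi> \<psi>) = (wf_stl \<phi> \<and> wf_stl \<psi>)"
| "wf_stl (Until a b \<phi> \<psi>) = (0 \<le> a \<and> a < b \<and> wf_stl \<phi> \<and> wf_stl \<psi>)"

text \<open>Quantitative robustness; c is the fixed positive robustness of tt.
  max/min over compact intervals are written as SUP/INF.\<close>
primrec rho :: "real \<Rightarrow> ('n::finite) stl \<Rightarrow> (real \<Rightarrow> real^'n) \<Rightarrow> real \<Rightarrow> real" where
  "rho c TT \<xi> t = c"
| "rho c (Atom f) \<xi> t = f (\<xi> t)"
| "rho c (Neg \<phi>) \<xi> t = - rho c \<phi> \<xi> t"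
| "rho c (And \<phi> \<psi>) \<xi> t = min (rho c \<phi> \<xi> t) (rho c \<psi> \<xi> t)"
| "rho c (Until a b \<phi> \<psi>) \<xi> t =
     (SUP t'\<in>{real_of_rat a + t .. real_of_rat b + t}.
        min (rho c \<psi> \<xi> t') (INF t''\<in>{t..t'}. rho c \<phi> \<xi> t''))"

definition stl_kernel ::
  "real \<Rightarrow> real set \<Rightarrow> (real \<Rightarrow> real^('n::finite)) measure \<Rightarrow> 'n stl \<Rightarrow> 'n stl \<Rightarrow> real" where
  "stl_kernel c I \<mu>0 \<phi> \<psi> =
     integral\<^sup>L \<mu>0 (\<lambda>\<xi>. set_lebesgue_integral lborel I (\<lambda>t. rho c \<phi> \<xi> t * rho c \<psi> \<xi> t))"

text \<open>A real Hilbert space whose vectors are real-valued functions on 'a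
  (vector operations pointwise), given by a carrier H and an inner product ip:
  H is a linear subspace, ip is a symmetric, bilinear, positive definite form on H,
  and H is complete for the norm induced by ip.\<close>
definition hilbert_space_on :: "('a \<Rightarrow> real) set \<Rightarrow> (('a \<Rightarrow> real) \<Rightarrow> ('a \<Rightarrow> real) \<Rightarrow> real) \<Rightarrow> bool" where
  "hilbert_space_on H ip \<longleftrightarrow>
     (\<lambda>_. 0) \<in> H \<and>
     (\<forall>x\<in>H. \<forall>y\<in>H. (\<lambda>i. x i + y i) \<in> H) \<and>
     (\<forall>r::real. \<forall>x\<in>H. (\<lambda>i. r * x i) \<in> H) \<and>
     (\<forall>x\<in>H. \<forall>y\<in>H. ip x y = ip y x) \<and>
     (\<forall>x\<in>H. \<forall>y\<in>H. \<forall>z\<in>H. ip (\<lambda>i. x i + y i) z = ip x z + ip y z) \<and>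
     (\<forall>r::real. \<forall>x\<in>H. \<forall>y\<in>H. ip (\<lambda>i. r * x i) y = r * ip x y) \<and>
     (\<forall>x\<in>H. 0 \<le> ip x x \<and> (ip x x = 0 \<longrightarrow> x = (\<lambda>_. 0))) \<and>
     (\<forall>X::nat \<Rightarrow> ('a \<Rightarrow> real).
        (\<forall>n. X n \<in> H) \<and>
        (\<forall>e>0. \<exists>N. \<forall>m\<ge>N. \<forall>n\<ge>N. sqrt (ip (\<lambda>i. X m i - X n i) (\<lambda>i. X m i - X n i)) < e)
        \<longrightarrow> (\<exists>L\<in>H. (\<lambda>n. sqrt (ip (\<lambda>i. X n i - L i) (\<lambda>i. X n i - L i))) \<longlonglongrightarrow> 0))"

end

theory Submission
  imports Defs
begin

definition Bk :: "('a \<Rightarrow> 'a \<Rightarrow> real) \<Rightarrow> (real \<times> 'a) list \<Rightarrow> (real \<times> 'a) list \<Rightarrow> real" where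
  "Bk K c d = (\<Sum>p\<leftarrow>c. \<Sum>q\<leftarrow>d. fst p * fst q * K (snd p) (snd q))"

definition smc :: "real \<Rightarrow> (real \<times> 'a) list \<Rightarrow> (real \<times> 'a) list" where
  "smc r c = map (\<lambda>p. (r * fst p, snd p)) c"

definition subc :: "(real \<times> 'a) list \<Rightarrow> (real \<times> 'a) list \<Rightarrow> (real \<times> 'a) list" where
  "subc c d = c @ smc (-1) d"

lemma Bk_append1[simp]: "Bk K (c@d) x = Bk K c x + Bk K d x" by (simp add: Bk_def)
lemma Bk_append2[simp]: "Bk K x (c@d) = Bk K x c + Bk K x d" by (simp add: Bk_def sum_list_addf)
lemma Bk_sm1[simp]: "Bk K (smc r c) x = r * Bk K c x"
  by (induction c) (auto simp: Bk_def smc_def algebra_simps sum_list_const_mult)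
lemma Bk_sm2[simp]: "Bk K x (smc r c) = r * Bk K x c"
proof (induction x)
  case Nil then show ?case by (simp add: Bk_def)
next
  case (Cons p x)
  have "(\<Sum>q\<leftarrow>smc r c. fst p * fst q * K (snd p) (snd q)) = r * (\<Sum>q\<leftarrow>c. fst p * fst q * K (snd p) (snd q))"
    by (induction c) (auto simp: smc_def algebra_simps)
  with Cons show ?case by (simp add: Bk_def algebra_simps)
qed
lemma Bk_sub1[simp]: "Bk K (subc c d) x = Bk K c x - Bk K d x" by (simp add: subc_def)
lemma Bk_sub2[simp]: "Bk K x (subc c d) = Bk K x c - Bk K x d" by (simp add: subc_def)
lemma Bk_Nil[simp]: "Bk K [] x = 0" "Bk K x [] = 0" by (simp_all add: Bk_def)
lemma Bk_single: "Bk K [(a,y)] [(b,z)] = a*b*K y z" by (simp add: Bk_def)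

definition evk :: "('a \<Rightarrow> 'a \<Rightarrow> real) \<Rightarrow> (real \<times> 'a) list \<Rightarrow> 'a \<Rightarrow> real" where
  "evk K c y = Bk K c [(1,y)]"

locale pdk =
  fixes K :: "'a \<Rightarrow> 'a \<Rightarrow> real"
  assumes Ksym: "\<And>x y. K x y = K y x"
  and Kpsd: "\<And>c. 0 \<le> Bk K c c"
begin

abbreviation "B \<equiv> Bk K"

lemma Bsym: "B c d = B d c"
proof (induction c)
  case Nil then show ?case by simp
next
  case (Cons p c)
  have "B (p#c) d = B [p] d + B c d" using Bk_append1[of K "[p]" c d] by simp
  moreover have "B d (p#c) = B d [p] + B d c" using Bk_append2[of K d "[p]" c] by simp
  moreover have "B [p] d = B d [p]"
    by (induction d) (auto simp: Bk_def Ksym[of "snd p"] algebra_simps)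
  ultimately show ?case using Cons by simp
qed

definition nrm :: "(real \<times> 'a) list \<Rightarrow> real" where "nrm c = sqrt (B c c)"

lemma nrm_nonneg: "0 \<le> nrm c" using Kpsd[of c] by (simp add: nrm_def)
lemma nrm_sq: "nrm c ^ 2 = B c c" using Kpsd[of c] by (simp add: nrm_def)

lemma CS_sq: "(B c d)^2 \<le> B c c * B d d"
proof -
  have q: "0 \<le> B c c + 2*t*B c d + t^2 * B d d" for t
  proof -
    have "0 \<le> B (c @ smc t d) (c @ smc t d)" by (rule Kpsd)
    also have "\<dots> = B c c + 2*t*B c d + t^2 * B d d"
      by (simp add: Bsym[of d c] algebra_simps power2_eq_square)
    finally show ?thesis .
  qed
  show ?thesis
  proof (cases "B d d = 0")
    case True
    have "B c d = 0"
    proof (rule ccontr)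
      assume ne: "B c d \<noteq> 0"
      have "0 \<le> B c c + 2*(-(B c c + 1)/(2*B c d))*B c d" using q[of "-(B c c + 1)/(2*B c d)"] True by simp
      also have "\<dots> = -1" using ne by (simp add: field_simps)
      finally show False by simp
    qed
    then show ?thesis using True by simp
  next
    case False
    then have pos: "B d d > 0" using Kpsd[of d] by simp
    have "0 \<le> B c c + 2*(-B c d/B d d)*B c d + (-B c d/B d d)^2 * B d d" by (rule q)
    also have "\<dots> = B c c - (B c d)^2 / B d d" using pos by (simp add: field_simps power2_eq_square)
    finally show ?thesis using pos by (simp add: field_simps)
  qed
qed

lemma CS: "\<bar>B c d\<bar> \<le> nrm c * nrm d"
proof -
  have "\<bar>B c d\<bar> = sqrt ((B c d)^2)" by simp
  also have "\<dots> \<le> sqrt (B c c * B d d)" using CS_sq by (rule real_sqrt_le_mono)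
  also have "\<dots> = nrm c * nrm d" by (simp add: nrm_def real_sqrt_mult)
  finally show ?thesis .
qed

lemma tri: "nrm (c @ d) \<le> nrm c + nrm d"
proof -
  have "B (c@d) (c@d) = B c c + 2 * B c d + B d d" by (simp add: Bsym[of d c])
  also have "\<dots> \<le> (nrm c)^2 + 2 * (nrm c * nrm d) + (nrm d)^2"
    using CS[of c d] by (simp add: nrm_sq)
  also have "\<dots> = (nrm c + nrm d)^2" by (simp add: power2_eq_square algebra_simps)
  finally have "sqrt (B (c@d) (c@d)) \<le> sqrt ((nrm c + nrm d)^2)" by (rule real_sqrt_le_mono)
  then show ?thesis using nrm_nonneg[of c] nrm_nonneg[of d] by (simp add: nrm_def)
qed

lemma nrm_cong: assumes "\<And>x. B c x = B c' x" shows "nrm c = nrm c'"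
proof -
  have "B c c = B c' c'" using assms[of c] assms[of c'] Bsym[of c c'] by simp
  then show ?thesis by (simp add: nrm_def)
qed

lemma nrm_sm: "nrm (smc r c) = \<bar>r\<bar> * nrm c"
proof -
  have "B (smc r c) (smc r c) = r^2 * B c c" by (simp add: power2_eq_square)
  then show ?thesis by (simp add: nrm_def real_sqrt_mult)
qed

lemma tri_sub: "nrm (subc a c) \<le> nrm (subc a b) + nrm (subc b c)"
proof -
  have "nrm (subc a c) = nrm (subc a b @ subc b c)" by (rule nrm_cong) simp
  then show ?thesis using tri by simp
qed

lemma nrm_sub_sym: "nrm (subc a b) = nrm (subc b a)"
proof -
  have "nrm (subc a b) = nrm (smc (-1) (subc b a))" by (rule nrm_cong) simp
  then show ?thesis by (simp add: nrm_sm)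
qed

lemma ev_bound: "\<bar>evk K c y\<bar> \<le> nrm c * nrm [(1,y)]"
  unfolding evk_def by (rule CS)

lemma ev_app[simp]: "evk K (c@d) y = evk K c y + evk K d y" by (simp add: evk_def)
lemma ev_sm[simp]: "evk K (smc r c) y = r * evk K c y" by (simp add: evk_def)
lemma ev_sub[simp]: "evk K (subc c d) y = evk K c y - evk K d y" by (simp add: evk_def)
lemma ev_Nil[simp]: "evk K [] y = 0" by (simp add: evk_def)

lemma nrm_Nil[simp]: "nrm [] = 0" by (simp add: nrm_def)
lemma nrm_subc_self[simp]: "nrm (subc c c) = 0"
proof -
  have "nrm (subc c c) = nrm []" by (rule nrm_cong) simp
  then show ?thesis by simp
qed

lemma nrm_diff: "\<bar>nrm a - nrm b\<bar> \<le> nrm (subc a b)"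
proof -
  have "nrm a = nrm (subc a b @ b)" by (rule nrm_cong) simp
  then have 1: "nrm a \<le> nrm (subc a b) + nrm b" using tri by simp
  have "nrm b = nrm (subc b a @ a)" by (rule nrm_cong) simp
  then have "nrm b \<le> nrm (subc b a) + nrm a" using tri[of "subc b a" a] by simp
  then have 2: "nrm b \<le> nrm (subc a b) + nrm a" using nrm_sub_sym[of b a] by simp
  from 1 2 show ?thesis by linarith
qed

definition cauchy :: "(nat \<Rightarrow> (real \<times> 'a) list) \<Rightarrow> bool" where
  "cauchy s \<longleftrightarrow> (\<forall>e>0. \<exists>N. \<forall>m\<ge>N. \<forall>n\<ge>N. nrm (subc (s m) (s n)) < e)"

definition lf :: "(nat \<Rightarrow> (real \<times> 'a) list) \<Rightarrow> 'a \<Rightarrow> real" where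
  "lf s = (\<lambda>y. lim (\<lambda>n. evk K (s n) y))"

lemma conv_lemma:
  fixes f :: "nat \<Rightarrow> real"
  assumes "cauchy s" "0 \<le> C" "\<And>m n. \<bar>f m - f n\<bar> \<le> C * nrm (subc (s m) (s n))"
  shows "convergent f"
proof -
  have "Cauchy f"
  proof (rule CauchyI)
    fix e :: real assume e: "0 < e"
    then have "e / (C+1) > 0" using assms(2) by simp
    then obtain N where N: "\<forall>m\<ge>N. \<forall>n\<ge>N. nrm (subc (s m) (s n)) < e/(C+1)"
      using assms(1) unfolding cauchy_def by blast
    have "norm (f m - f n) < e" if "m \<ge> N" "n \<ge> N" for m n
    proof -
      have "\<bar>f m - f n\<bar> \<le> C * nrm (subc (s m) (s n))" by (rule assms(3))
      also have "\<dots> \<le> C * (e/(C+1))" using N that assms(2) by (intro mult_left_mono) (auto intro: less_imp_le)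
      also have "\<dots> < e" using e assms(2) by (simp add: field_simps)
      finally show ?thesis by simp
    qed
    then show "\<exists>M. \<forall>m\<ge>M. \<forall>n\<ge>M. norm (f m - f n) < e" by blast
  qed
  then show ?thesis by (simp add: Cauchy_convergent_iff)
qed

lemma lf_tendsto: assumes "cauchy s" shows "(\<lambda>n. evk K (s n) y) \<longlonglongrightarrow> lf s y"
proof -
  have "convergent (\<lambda>n. evk K (s n) y)"
  proof (rule conv_lemma[OF assms nrm_nonneg[of "[(1,y)]"]])
    fix m n
    show "\<bar>evk K (s m) y - evk K (s n) y\<bar> \<le> nrm [(1, y)] * nrm (subc (s m) (s n))"
      using ev_bound[of "subc (s m) (s n)" y] by (simp add: mult.commute)
  qed
  then show ?thesis by (simp add: lf_def convergent_LIMSEQ_iff)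
qed

lemma nrm_bounded: assumes "cauchy s" obtains M where "\<And>n. nrm (s n) \<le> M"
proof -
  have "convergent (\<lambda>n. nrm (s n))"
  proof (rule conv_lemma[OF assms])
    show "(0::real) \<le> 1" by simp
    fix m n show "\<bar>nrm (s m) - nrm (s n)\<bar> \<le> 1 * nrm (subc (s m) (s n))" using nrm_diff by simp
  qed
  then have "Bseq (\<lambda>n. nrm (s n))" by (rule convergent_imp_Bseq)
  then obtain M where "\<And>n. norm (nrm (s n)) \<le> M" by (rule BseqE) blast
  then have "nrm (s n) \<le> M" for n using abs_le_D1[of "nrm (s n)" M] by simp
  then show ?thesis using that by blast
qed

lemma cauchy_const: "cauchy (\<lambda>_. c)" by (simp add: cauchy_def)

lemma cauchy_app: assumes "cauchy s" "cauchy t" shows "cauchy (\<lambda>n. s n @ t n)"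
  unfolding cauchy_def
proof (intro allI impI)
  fix e :: real assume "e > 0"
  then obtain N1 N2 where N1: "\<forall>m\<ge>N1. \<forall>n\<ge>N1. nrm (subc (s m) (s n)) < e/2"
    and N2: "\<forall>m\<ge>N2. \<forall>n\<ge>N2. nrm (subc (t m) (t n)) < e/2"
    using assms unfolding cauchy_def by (meson half_gt_zero)
  have "nrm (subc (s m @ t m) (s n @ t n)) < e" if "m \<ge> max N1 N2" "n \<ge> max N1 N2" for m n
  proof -
    have "nrm (subc (s m @ t m) (s n @ t n)) = nrm (subc (s m) (s n) @ subc (t m) (t n))"
      by (rule nrm_cong) simp
    also have "\<dots> \<le> nrm (subc (s m) (s n)) + nrm (subc (t m) (t n))" by (rule tri)
    also have "\<dots> < e" using N1 N2 that by fastforce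
    finally show ?thesis .
  qed
  then show "\<exists>N. \<forall>m\<ge>N. \<forall>n\<ge>N. nrm (subc (s m @ t m) (s n @ t n)) < e" by blast
qed

lemma cauchy_sm: assumes "cauchy s" shows "cauchy (\<lambda>n. smc r (s n))"
  unfolding cauchy_def
proof (intro allI impI)
  fix e :: real assume "e > 0"
  then have "e / (\<bar>r\<bar>+1) > 0" by simp
  then obtain N where N: "\<forall>m\<ge>N. \<forall>n\<ge>N. nrm (subc (s m) (s n)) < e/(\<bar>r\<bar>+1)"
    using assms unfolding cauchy_def by blast
  have "nrm (subc (smc r (s m)) (smc r (s n))) < e" if "m \<ge> N" "n \<ge> N" for m n
  proof -
    have "nrm (subc (smc r (s m)) (smc r (s n))) = nrm (smc r (subc (s m) (s n)))"
      by (rule nrm_cong) (simp add: algebra_simps)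
    also have "\<dots> = \<bar>r\<bar> * nrm (subc (s m) (s n))" by (rule nrm_sm)
    also have "\<dots> \<le> \<bar>r\<bar> * (e/(\<bar>r\<bar>+1))" using N that by (intro mult_left_mono) (auto intro: less_imp_le)
    also have "\<dots> < e" using \<open>e > 0\<close> by (simp add: field_simps)
    finally show ?thesis .
  qed
  then show "\<exists>N. \<forall>m\<ge>N. \<forall>n\<ge>N. nrm (subc (smc r (s m)) (smc r (s n))) < e" by blast
qed

lemma cauchy_sub: assumes "cauchy s" "cauchy t" shows "cauchy (\<lambda>n. subc (s n) (t n))"
  unfolding subc_def using cauchy_app[OF assms(1) cauchy_sm[OF assms(2)]] .

lemma lf_app: assumes "cauchy s" "cauchy t" shows "lf (\<lambda>n. s n @ t n) = (\<lambda>i. lf s i + lf t i)"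
proof
  fix y
  have "(\<lambda>n. evk K (s n @ t n) y) \<longlonglongrightarrow> lf s y + lf t y"
    using tendsto_add[OF lf_tendsto[OF assms(1)] lf_tendsto[OF assms(2)]] by simp
  then show "lf (\<lambda>n. s n @ t n) y = lf s y + lf t y" unfolding lf_def by (rule limI)
qed

lemma lf_sm: assumes "cauchy s" shows "lf (\<lambda>n. smc r (s n)) = (\<lambda>i. r * lf s i)"
proof
  fix y
  have "(\<lambda>n. evk K (smc r (s n)) y) \<longlonglongrightarrow> r * lf s y"
    using tendsto_mult[OF tendsto_const lf_tendsto[OF assms(1)]] by simp
  then show "lf (\<lambda>n. smc r (s n)) y = r * lf s y" unfolding lf_def by (rule limI)
qed

lemma lf_sub: assumes "cauchy s" "cauchy t" shows "lf (\<lambda>n. subc (s n) (t n)) = (\<lambda>i. lf s i - lf t i)"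
proof
  fix y
  have "(\<lambda>n. evk K (subc (s n) (t n)) y) \<longlonglongrightarrow> lf s y - lf t y"
    using tendsto_diff[OF lf_tendsto[OF assms(1)] lf_tendsto[OF assms(2)]] by simp
  then show "lf (\<lambda>n. subc (s n) (t n)) y = lf s y - lf t y" unfolding lf_def by (rule limI)
qed

lemma lf_const: "lf (\<lambda>_. c) = evk K c" by (simp add: lf_def)

lemma B_ev: "B c d = (\<Sum>p\<leftarrow>c. fst p * evk K d (snd p))"
proof (induction c)
  case Nil then show ?case by simp
next
  case (Cons p c)
  have "B (p#c) d = B [p] d + B c d" using Bk_append1[of K "[p]" c d] by simp
  moreover have "B [p] d = fst p * evk K d (snd p)"
    unfolding evk_def Bsym[of d]
    by (induction d) (auto simp: Bk_def algebra_simps)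
  ultimately show ?case using Cons by simp
qed

lemma sum_list_tendsto0:
  assumes "\<And>p. p \<in> set c \<Longrightarrow> (\<lambda>m. f m p) \<longlonglongrightarrow> (0::real)"
  shows "(\<lambda>m. \<Sum>p\<leftarrow>c. g p * f m p) \<longlonglongrightarrow> 0"
  using assms
proof (induction c)
  case Nil then show ?case by simp
next
  case (Cons p c)
  have "(\<lambda>m. g p * f m p + (\<Sum>p\<leftarrow>c. g p * f m p)) \<longlonglongrightarrow> g p * 0 + 0"
    using Cons by (intro tendsto_intros) auto
  then show ?case by simp
qed

lemma KL: assumes s: "cauchy s" and t: "cauchy t" and eq: "lf s = lf t"
  shows "(\<lambda>n. nrm (subc (s n) (t n))) \<longlonglongrightarrow> 0"
proof -
  define d where "d n = subc (s n) (t n)" for n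
  have cd: "cauchy d" unfolding d_def by (rule cauchy_sub[OF s t])
  have lfd: "lf d = (\<lambda>_. 0)" unfolding d_def lf_sub[OF s t] eq by simp
  have evd: "(\<lambda>m. evk K (d m) y) \<longlonglongrightarrow> 0" for y using lf_tendsto[OF cd, of y] lfd by simp
  obtain M where M: "\<And>n. nrm (d n) \<le> M" using nrm_bounded[OF cd] by blast
  have M0: "0 \<le> M" using M[of 0] nrm_nonneg[of "d 0"] by linarith
  have key: "\<exists>N. \<forall>n\<ge>N. B (d n) (d n) \<le> M * e" if e: "e > 0" for e
  proof -
    obtain N where N: "\<forall>m\<ge>N. \<forall>n\<ge>N. nrm (subc (d m) (d n)) < e"
      using cd e unfolding cauchy_def by blast
    have "B (d n) (d n) \<le> M * e" if n: "n \<ge> N" for n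
    proof -
      have lim: "(\<lambda>m. M * e + B (d n) (d m)) \<longlonglongrightarrow> M * e + 0"
        unfolding B_ev by (intro tendsto_intros sum_list_tendsto0 evd)
      have "B (d n) (d n) \<le> M * e + B (d n) (d m)" if m: "m \<ge> N" for m
      proof -
        have "B (d n) (d n) = B (d n) (subc (d n) (d m)) + B (d n) (d m)" by simp
        also have "B (d n) (subc (d n) (d m)) \<le> nrm (d n) * nrm (subc (d n) (d m))"
          using CS[of "d n" "subc (d n) (d m)"] by simp
        also have "\<dots> \<le> M * e"
          using M[of n] N m n nrm_nonneg[of "d n"] nrm_nonneg[of "subc (d n) (d m)"] M0
          by (meson less_imp_le mult_mono)
        finally show ?thesis by simp
      qed
      then show ?thesis using LIMSEQ_le_const[OF lim] by auto
    qed
    then show ?thesis by blast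
  qed
  show ?thesis unfolding d_def[symmetric] LIMSEQ_iff
  proof (intro allI impI)
    fix r :: real assume r: "r > 0"
    define e where "e = r^2 / (M+1)"
    have e: "e > 0" using r M0 by (simp add: e_def)
    obtain N where N: "\<forall>n\<ge>N. B (d n) (d n) \<le> M * e" using key[OF e] by blast
    have "norm (nrm (d n) - 0) < r" if "n \<ge> N" for n
    proof -
      have "M * e < r^2" using r M0 by (simp add: e_def field_simps)
      then have "B (d n) (d n) < r^2" using N that by force
      then have "sqrt (B (d n) (d n)) < sqrt (r^2)" using real_sqrt_less_mono by blast
      then show ?thesis using r nrm_nonneg[of "d n"] by (simp add: nrm_def)
    qed
    then show "\<exists>no. \<forall>n\<ge>no. norm (nrm (d n) - 0) < r" by blast
  qed
qed

definition rep :: "('a \<Rightarrow> real) \<Rightarrow> nat \<Rightarrow> (real \<times> 'a) list" where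
  "rep h = (SOME s. cauchy s \<and> lf s = h)"

definition Hs :: "('a \<Rightarrow> real) set" where "Hs = {h. \<exists>s. cauchy s \<and> lf s = h}"

definition ipk :: "('a \<Rightarrow> real) \<Rightarrow> ('a \<Rightarrow> real) \<Rightarrow> real" where
  "ipk h k = lim (\<lambda>n. B (rep h n) (rep k n))"

lemma rep: assumes "cauchy s" shows "cauchy (rep (lf s))" "lf (rep (lf s)) = lf s"
proof -
  have "cauchy (rep (lf s)) \<and> lf (rep (lf s)) = lf s"
    unfolding rep_def by (rule someI[of "\<lambda>t. cauchy t \<and> lf t = lf s" s]) (simp add: assms)
  then show "cauchy (rep (lf s))" "lf (rep (lf s)) = lf s" by auto
qed

lemma Blim: assumes s: "cauchy s" and t: "cauchy t" shows "convergent (\<lambda>n. B (s n) (t n))"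
proof -
  obtain Ms where Ms: "\<And>n. nrm (s n) \<le> Ms" using nrm_bounded[OF s] by blast
  obtain Mt where Mt: "\<And>n. nrm (t n) \<le> Mt" using nrm_bounded[OF t] by blast
  have Ms0: "0 \<le> Ms" using Ms[of 0] nrm_nonneg[of "s 0"] by linarith
  have Mt0: "0 \<le> Mt" using Mt[of 0] nrm_nonneg[of "t 0"] by linarith
  have "Cauchy (\<lambda>n. B (s n) (t n))"
  proof (rule CauchyI)
    fix e :: real assume e: "0 < e"
    define e1 where "e1 = e / (2 * (Mt + 1))"
    define e2 where "e2 = e / (2 * (Ms + 1))"
    have e12: "e1 > 0" "e2 > 0" using e Ms0 Mt0 by (simp_all add: e1_def e2_def)
    then obtain N1 N2 where N1: "\<forall>m\<ge>N1. \<forall>n\<ge>N1. nrm (subc (s m) (s n)) < e1"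
      and N2: "\<forall>m\<ge>N2. \<forall>n\<ge>N2. nrm (subc (t m) (t n)) < e2"
      using s t unfolding cauchy_def by blast
    have "norm (B (s m) (t m) - B (s n) (t n)) < e" if "m \<ge> max N1 N2" "n \<ge> max N1 N2" for m n
    proof -
      have "B (s m) (t m) - B (s n) (t n) = B (subc (s m) (s n)) (t m) + B (s n) (subc (t m) (t n))"
        by simp
      then have "norm (B (s m) (t m) - B (s n) (t n)) \<le> \<bar>B (subc (s m) (s n)) (t m)\<bar> + \<bar>B (s n) (subc (t m) (t n))\<bar>"
        by simp
      also have "\<dots> \<le> nrm (subc (s m) (s n)) * nrm (t m) + nrm (s n) * nrm (subc (t m) (t n))"
        by (rule add_mono[OF CS CS])
      also have "\<dots> \<le> e1 * Mt + Ms * e2"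
        using N1 N2 that Ms[of n] Mt[of m] nrm_nonneg Ms0 Mt0 e12
        by (intro add_mono mult_mono) (auto intro: less_imp_le)
      also have "\<dots> < e"
      proof -
        have "e1 * Mt < e/2" unfolding e1_def using e Mt0 by (simp add: field_simps)
        moreover have "Ms * e2 < e/2" unfolding e2_def using e Ms0 by (simp add: field_simps)
        ultimately show ?thesis by linarith
      qed
      finally show ?thesis .
    qed
    then show "\<exists>M. \<forall>m\<ge>M. \<forall>n\<ge>M. norm (B (s m) (t m) - B (s n) (t n)) < e" by blast
  qed
  then show ?thesis by (simp add: Cauchy_convergent_iff)
qed

lemma IP: assumes s: "cauchy s" and t: "cauchy t"
  shows "(\<lambda>n. B (s n) (t n)) \<longlonglongrightarrow> ipk (lf s) (lf t)"
proof -
  define s' where "s' = rep (lf s)"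
  define t' where "t' = rep (lf t)"
  have s': "cauchy s'" "lf s' = lf s" using rep[OF s] by (simp_all add: s'_def)
  have t': "cauchy t'" "lf t' = lf t" using rep[OF t] by (simp_all add: t'_def)
  have 1: "(\<lambda>n. B (s' n) (t' n)) \<longlonglongrightarrow> ipk (lf s) (lf t)"
    using Blim[OF s'(1) t'(1)] unfolding ipk_def s'_def t'_def by (simp add: convergent_LIMSEQ_iff)
  obtain Ms where Ms: "\<And>n. nrm (s n) \<le> Ms" using nrm_bounded[OF s] by blast
  obtain Mt where Mt: "\<And>n. nrm (t' n) \<le> Mt" using nrm_bounded[OF t'(1)] by blast
  have Ms0: "0 \<le> Ms" using Ms[of 0] nrm_nonneg[of "s 0"] by linarith
  have Mt0: "0 \<le> Mt" using Mt[of 0] nrm_nonneg[of "t' 0"] by linarith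
  have k1: "(\<lambda>n. nrm (subc (s' n) (s n))) \<longlonglongrightarrow> 0" by (rule KL[OF s'(1) s s'(2)])
  have k2: "(\<lambda>n. nrm (subc (t' n) (t n))) \<longlonglongrightarrow> 0" by (rule KL[OF t'(1) t t'(2)])
  have 2: "(\<lambda>n. B (s' n) (t' n) - B (s n) (t n)) \<longlonglongrightarrow> 0"
  proof (rule Lim_null_comparison)
    show "\<forall>\<^sub>F n in sequentially. norm (B (s' n) (t' n) - B (s n) (t n)) \<le>
          nrm (subc (s' n) (s n)) * Mt + Ms * nrm (subc (t' n) (t n))"
    proof (rule always_eventually, rule allI)
      fix n
      have "B (s' n) (t' n) - B (s n) (t n) = B (subc (s' n) (s n)) (t' n) + B (s n) (subc (t' n) (t n))"
        by simp
      then have "norm (B (s' n) (t' n) - B (s n) (t n)) \<le> \<bar>B (subc (s' n) (s n)) (t' n)\<bar> + \<bar>B (s n) (subc (t' n) (t n))\<bar>"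
        by simp
      also have "\<dots> \<le> nrm (subc (s' n) (s n)) * nrm (t' n) + nrm (s n) * nrm (subc (t' n) (t n))"
        by (rule add_mono[OF CS CS])
      also have "\<dots> \<le> nrm (subc (s' n) (s n)) * Mt + Ms * nrm (subc (t' n) (t n))"
        using Ms[of n] Mt[of n] nrm_nonneg Ms0 Mt0
        by (intro add_mono mult_mono) auto
      finally show "norm (B (s' n) (t' n) - B (s n) (t n)) \<le>
          nrm (subc (s' n) (s n)) * Mt + Ms * nrm (subc (t' n) (t n))" .
    qed
    show "(\<lambda>n. nrm (subc (s' n) (s n)) * Mt + Ms * nrm (subc (t' n) (t n))) \<longlonglongrightarrow> 0"
      using tendsto_add[OF tendsto_mult[OF k1 tendsto_const[of Mt]] tendsto_mult[OF tendsto_const[of Ms] k2]]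
      by simp
  qed
  have "(\<lambda>n. B (s' n) (t' n) - (B (s' n) (t' n) - B (s n) (t n))) \<longlonglongrightarrow> ipk (lf s) (lf t) - 0"
    by (rule tendsto_diff[OF 1 2])
  then show ?thesis by simp
qed

lemma NRM: assumes s: "cauchy s" and t: "cauchy t"
  shows "(\<lambda>n. nrm (subc (s n) (t n))) \<longlonglongrightarrow> sqrt (ipk (\<lambda>i. lf s i - lf t i) (\<lambda>i. lf s i - lf t i))"
proof -
  have "(\<lambda>n. B (subc (s n) (t n)) (subc (s n) (t n))) \<longlonglongrightarrow> ipk (\<lambda>i. lf s i - lf t i) (\<lambda>i. lf s i - lf t i)"
    using IP[OF cauchy_sub[OF s t] cauchy_sub[OF s t]] unfolding lf_sub[OF s t] .
  then show ?thesis unfolding nrm_def by (rule tendsto_real_sqrt)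
qed

lemma Hs_lf: assumes "h \<in> Hs" shows "cauchy (rep h)" "lf (rep h) = h"
proof -
  obtain s where "cauchy s" "lf s = h" using assms by (auto simp: Hs_def)
  then show "cauchy (rep h)" "lf (rep h) = h" using rep by auto
qed

lemma Hs_I: "cauchy s \<Longrightarrow> lf s \<in> Hs" by (auto simp: Hs_def)

lemma hilbert: "hilbert_space_on Hs ipk"
  unfolding hilbert_space_on_def
proof (intro conjI ballI allI impI)
  have "evk K [] = (\<lambda>_. 0)" by (simp add: fun_eq_iff)
  then show "(\<lambda>_. 0) \<in> Hs" using Hs_I[OF cauchy_const[of "[]"]] by (simp add: lf_const)
next
  fix x y assume x: "x \<in> Hs" and y: "y \<in> Hs"
  show "(\<lambda>i. x i + y i) \<in> Hs"
    using Hs_I[OF cauchy_app[OF Hs_lf(1)[OF x] Hs_lf(1)[OF y]]]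
    unfolding lf_app[OF Hs_lf(1)[OF x] Hs_lf(1)[OF y]] Hs_lf(2)[OF x] Hs_lf(2)[OF y] .
next
  fix r :: real and x assume x: "x \<in> Hs"
  show "(\<lambda>i. r * x i) \<in> Hs"
    using Hs_I[OF cauchy_sm[OF Hs_lf(1)[OF x], of r]]
    unfolding lf_sm[OF Hs_lf(1)[OF x]] Hs_lf(2)[OF x] .
next
  fix x y assume x: "x \<in> Hs" and y: "y \<in> Hs"
  have 1: "(\<lambda>n. B (rep x n) (rep y n)) \<longlonglongrightarrow> ipk x y"
    using IP[OF Hs_lf(1)[OF x] Hs_lf(1)[OF y]] unfolding Hs_lf(2)[OF x] Hs_lf(2)[OF y] .
  have 2: "(\<lambda>n. B (rep y n) (rep x n)) \<longlonglongrightarrow> ipk y x"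
    using IP[OF Hs_lf(1)[OF y] Hs_lf(1)[OF x]] unfolding Hs_lf(2)[OF x] Hs_lf(2)[OF y] .
  show "ipk x y = ipk y x" using LIMSEQ_unique[OF 1] 2 by (simp add: Bsym)
next
  fix x y z assume x: "x \<in> Hs" and y: "y \<in> Hs" and z: "z \<in> Hs"
  note cx = Hs_lf(1)[OF x] and cy = Hs_lf(1)[OF y] and cz = Hs_lf(1)[OF z]
  have 1: "(\<lambda>n. B (rep x n @ rep y n) (rep z n)) \<longlonglongrightarrow> ipk (\<lambda>i. x i + y i) z"
    using IP[OF cauchy_app[OF cx cy] cz] unfolding lf_app[OF cx cy] Hs_lf(2)[OF x] Hs_lf(2)[OF y] Hs_lf(2)[OF z] .
  have 2: "(\<lambda>n. B (rep x n @ rep y n) (rep z n)) \<longlonglongrightarrow> ipk x z + ipk y z"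
    using tendsto_add[OF IP[OF cx cz] IP[OF cy cz]] unfolding Hs_lf(2)[OF x] Hs_lf(2)[OF y] Hs_lf(2)[OF z]
    by simp
  show "ipk (\<lambda>i. x i + y i) z = ipk x z + ipk y z" using LIMSEQ_unique[OF 1 2] .
next
  fix r :: real and x y assume x: "x \<in> Hs" and y: "y \<in> Hs"
  note cx = Hs_lf(1)[OF x] and cy = Hs_lf(1)[OF y]
  have 1: "(\<lambda>n. B (smc r (rep x n)) (rep y n)) \<longlonglongrightarrow> ipk (\<lambda>i. r * x i) y"
    using IP[OF cauchy_sm[OF cx] cy] unfolding lf_sm[OF cx] Hs_lf(2)[OF x] Hs_lf(2)[OF y] .
  have 2: "(\<lambda>n. B (smc r (rep x n)) (rep y n)) \<longlonglongrightarrow> r * ipk x y"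
    using tendsto_mult[OF tendsto_const[of r] IP[OF cx cy]] unfolding Hs_lf(2)[OF x] Hs_lf(2)[OF y]
    by simp
  show "ipk (\<lambda>i. r * x i) y = r * ipk x y" using LIMSEQ_unique[OF 1 2] .
next
  fix x assume x: "x \<in> Hs"
  note cx = Hs_lf(1)[OF x]
  have 1: "(\<lambda>n. B (rep x n) (rep x n)) \<longlonglongrightarrow> ipk x x"
    using IP[OF cx cx] unfolding Hs_lf(2)[OF x] .
  show "0 \<le> ipk x x" by (rule LIMSEQ_le_const[OF 1]) (simp add: Kpsd)
  assume 0: "ipk x x = 0"
  have n0: "(\<lambda>n. nrm (rep x n)) \<longlonglongrightarrow> 0"
    using tendsto_real_sqrt[OF 1] 0 unfolding nrm_def by simp
  show "x = (\<lambda>_. 0)"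
  proof
    fix y
    have "(\<lambda>n. evk K (rep x n) y) \<longlonglongrightarrow> 0"
    proof (rule Lim_null_comparison)
      show "\<forall>\<^sub>F n in sequentially. norm (evk K (rep x n) y) \<le> nrm (rep x n) * nrm [(1,y)]"
        using ev_bound by simp
      show "(\<lambda>n. nrm (rep x n) * nrm [(1,y)]) \<longlonglongrightarrow> 0"
        using tendsto_mult[OF n0 tendsto_const[of "nrm [(1,y)]"]] by simp
    qed
    moreover have "(\<lambda>n. evk K (rep x n) y) \<longlonglongrightarrow> x y"
      using lf_tendsto[OF cx, of y] unfolding Hs_lf(2)[OF x] .
    ultimately show "x y = 0" using LIMSEQ_unique by blast
  qed
next
  fix X :: "nat \<Rightarrow> 'a \<Rightarrow> real"
  assume "(\<forall>n. X n \<in> Hs) \<and>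
    (\<forall>e>0. \<exists>N. \<forall>m\<ge>N. \<forall>n\<ge>N. sqrt (ipk (\<lambda>i. X m i - X n i) (\<lambda>i. X m i - X n i)) < e)"
  then have XH: "\<And>n. X n \<in> Hs"
    and XC: "\<And>e. e > 0 \<Longrightarrow> \<exists>N. \<forall>m\<ge>N. \<forall>n\<ge>N. sqrt (ipk (\<lambda>i. X m i - X n i) (\<lambda>i. X m i - X n i)) < e"
    by auto
  define s where "s k = rep (X k)" for k
  have cs: "cauchy (s k)" and ls: "lf (s k) = X k" for k using Hs_lf[OF XH[of k]] by (simp_all add: s_def)
  have "\<exists>m. \<forall>n\<ge>m. nrm (subc (s k n) (s k m)) < 1 / (Suc k)" for k
  proof -
    have "(1::real) / Suc k > 0" by simp
    then obtain N where "\<forall>m\<ge>N. \<forall>n\<ge>N. nrm (subc (s k m) (s k n)) < 1 / Suc k"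
      using cs[of k] unfolding cauchy_def by blast
    then show ?thesis by auto
  qed
  then have "\<forall>k. \<exists>m. \<forall>n\<ge>m. nrm (subc (s k n) (s k m)) < 1 / Suc k" by blast
  then obtain mk where "\<forall>k. \<forall>n\<ge>mk k. nrm (subc (s k n) (s k (mk k))) < 1 / Suc k"
    using choice[of "\<lambda>k m. \<forall>n\<ge>m. nrm (subc (s k n) (s k m)) < 1 / Suc k"] by blast
  then have mk: "\<And>k n. n \<ge> mk k \<Longrightarrow> nrm (subc (s k n) (s k (mk k))) < 1 / Suc k" by blast
  define c where "c k = s k (mk k)" for k
  have hn: "(\<lambda>n. nrm (subc (s k n) (s l n))) \<longlonglongrightarrow> sqrt (ipk (\<lambda>i. X k i - X l i) (\<lambda>i. X k i - X l i))" for k l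
    using NRM[OF cs[of k] cs[of l]] unfolding ls .
  have cc: "cauchy c" unfolding cauchy_def
  proof (intro allI impI)
    fix e :: real assume e: "e > 0"
    obtain N0 where N0: "\<forall>m\<ge>N0. \<forall>n\<ge>N0. sqrt (ipk (\<lambda>i. X m i - X n i) (\<lambda>i. X m i - X n i)) < e/3"
      using XC[of "e/3"] e by auto
    obtain N1 where N1: "1 / Suc N1 < e/3"
      using reals_Archimedean[of "e/3"] e by (auto simp: inverse_eq_divide)
    have "nrm (subc (c k) (c l)) < e" if k: "k \<ge> max N0 N1" and l: "l \<ge> max N0 N1" for k l
    proof -
      have lim: "(\<lambda>n. 1 / Suc k + nrm (subc (s k n) (s l n)) + 1 / Suc l) \<longlonglongrightarrow>
          1 / Suc k + sqrt (ipk (\<lambda>i. X k i - X l i) (\<lambda>i. X k i - X l i)) + 1 / Suc l"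
        by (intro tendsto_intros hn)
      have "nrm (subc (c k) (c l)) \<le> 1 / Suc k + nrm (subc (s k n) (s l n)) + 1 / Suc l"
        if n: "n \<ge> max (mk k) (mk l)" for n
      proof -
        have 1: "nrm (subc (c k) (c l)) \<le> nrm (subc (c k) (s k n)) + nrm (subc (s k n) (c l))"
          by (rule tri_sub)
        have 2: "nrm (subc (s k n) (c l)) \<le> nrm (subc (s k n) (s l n)) + nrm (subc (s l n) (c l))"
          by (rule tri_sub)
        have nk: "n \<ge> mk k" and nl: "n \<ge> mk l" using n by auto
        have 3: "nrm (subc (c k) (s k n)) < 1 / Suc k"
          using mk[OF nk] nrm_sub_sym[of "c k" "s k n"] by (simp add: c_def)
        have 4: "nrm (subc (s l n) (c l)) < 1 / Suc l"
          using mk[OF nl] by (simp add: c_def)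
        from 1 2 3 4 show ?thesis by linarith
      qed
      then have "nrm (subc (c k) (c l)) \<le> 1 / Suc k + sqrt (ipk (\<lambda>i. X k i - X l i) (\<lambda>i. X k i - X l i)) + 1 / Suc l"
        using LIMSEQ_le_const[OF lim] by blast
      also have "\<dots> < e/3 + e/3 + e/3"
      proof -
        have "1 / real (Suc k) \<le> 1 / Suc N1" using k by (intro divide_left_mono) auto
        moreover have "1 / real (Suc l) \<le> 1 / Suc N1" using l by (intro divide_left_mono) auto
        moreover have "k \<ge> N0" "l \<ge> N0" using k l by auto
        then have "sqrt (ipk (\<lambda>i. X k i - X l i) (\<lambda>i. X k i - X l i)) < e/3" using N0 by blast
        ultimately show ?thesis using N1 by linarith
      qed
      finally show ?thesis by simp
    qed
    then show "\<exists>N. \<forall>m\<ge>N. \<forall>n\<ge>N. nrm (subc (c m) (c n)) < e" by blast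
  qed
  show "\<exists>L\<in>Hs. (\<lambda>n. sqrt (ipk (\<lambda>i. X n i - L i) (\<lambda>i. X n i - L i))) \<longlonglongrightarrow> 0"
  proof (intro bexI[of _ "lf c"] Hs_I[OF cc])
    have hL: "(\<lambda>n. nrm (subc (s k n) (c n))) \<longlonglongrightarrow> sqrt (ipk (\<lambda>i. X k i - lf c i) (\<lambda>i. X k i - lf c i))" for k
      using NRM[OF cs[of k] cc] unfolding ls .
    show "(\<lambda>k. sqrt (ipk (\<lambda>i. X k i - lf c i) (\<lambda>i. X k i - lf c i))) \<longlonglongrightarrow> 0"
      unfolding LIMSEQ_iff
    proof (intro allI impI)
      fix r :: real assume r: "r > 0"
      obtain N where N: "\<forall>m\<ge>N. \<forall>n\<ge>N. nrm (subc (c m) (c n)) < r/2"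
        using cc r unfolding cauchy_def by (meson half_gt_zero)
      obtain N1 where N1: "1 / Suc N1 < r/2"
        using reals_Archimedean[of "r/2"] r by (auto simp: inverse_eq_divide)
      have "norm (sqrt (ipk (\<lambda>i. X k i - lf c i) (\<lambda>i. X k i - lf c i)) - 0) < r"
        if k: "k \<ge> max N N1" for k
      proof -
        have ge: "0 \<le> sqrt (ipk (\<lambda>i. X k i - lf c i) (\<lambda>i. X k i - lf c i))"
          by (rule LIMSEQ_le_const[OF hL]) (simp add: nrm_nonneg)
        have "nrm (subc (s k n) (c n)) \<le> 1 / Suc k + r/2" if n: "n \<ge> max (mk k) N" for n
        proof -
          have 1: "nrm (subc (s k n) (c n)) \<le> nrm (subc (s k n) (c k)) + nrm (subc (c k) (c n))"
            by (rule tri_sub)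
          have "n \<ge> mk k" using n by auto
          then have 2: "nrm (subc (s k n) (c k)) < 1 / Suc k" using mk by (simp add: c_def)
          have "k \<ge> N" "n \<ge> N" using k n by auto
          then have 3: "nrm (subc (c k) (c n)) < r/2" using N by blast
          from 1 2 3 show ?thesis by linarith
        qed
        then have "sqrt (ipk (\<lambda>i. X k i - lf c i) (\<lambda>i. X k i - lf c i)) \<le> 1 / Suc k + r/2"
          using LIMSEQ_le_const2[OF hL] by blast
        moreover have "1 / real (Suc k) \<le> 1 / Suc N1" using k by (intro divide_left_mono) auto
        ultimately show ?thesis using N1 ge by simp
      qed
      then show "\<exists>no. \<forall>n\<ge>no. norm (sqrt (ipk (\<lambda>i. X n i - lf c i) (\<lambda>i. X n i - lf c i)) - 0) < r"
        by blast
    qed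
  qed
qed

lemma rkhs: "\<exists>H ip (\<Phi> :: 'a \<Rightarrow> 'a \<Rightarrow> real). hilbert_space_on H ip \<and> (\<forall>x. \<Phi> x \<in> H) \<and>
    (\<forall>x y. K x y = ip (\<Phi> x) (\<Phi> y))"
proof (intro exI conjI allI)
  show "hilbert_space_on Hs ipk" by (rule hilbert)
  fix x show "lf (\<lambda>_. [(1,x)]) \<in> Hs" by (rule Hs_I[OF cauchy_const])
next
  fix x y
  have "(\<lambda>n. B [(1,x)] [(1,y)]) \<longlonglongrightarrow> ipk (lf (\<lambda>_. [(1,x)])) (lf (\<lambda>_. [(1,y)]))"
    by (rule IP[OF cauchy_const cauchy_const])
  then have "B [(1,x)] [(1,y)] = ipk (lf (\<lambda>_. [(1,x)])) (lf (\<lambda>_. [(1,y)]))"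
      by (rule LIMSEQ_unique[OF tendsto_const])
  then show "K x y = ipk (lf (\<lambda>_. [(1,x)])) (lf (\<lambda>_. [(1,y)]))" by (simp add: Bk_single)
qed

end



lemma abs_INF_le:
  fixes f :: "'b \<Rightarrow> real"
  assumes "S \<noteq> {}" "\<And>x. x \<in> S \<Longrightarrow> \<bar>f x\<bar> \<le> M"
  shows "\<bar>(INF x\<in>S. f x)\<bar> \<le> M"
proof -
  have bb: "bdd_below (f ` S)"
  proof (rule bdd_belowI2)
    fix x assume "x \<in> S" then show "-M \<le> f x" using assms(2)[of x] by linarith
  qed
  obtain x0 where x0: "x0 \<in> S" using assms(1) by blast
  have "(INF x\<in>S. f x) \<le> f x0" by (rule cINF_lower[OF bb x0])
  moreover have "-M \<le> (INF x\<in>S. f x)"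
  proof (rule cINF_greatest[OF assms(1)])
    fix x assume "x \<in> S" then show "-M \<le> f x" using assms(2)[of x] by linarith
  qed
  moreover have "f x0 \<le> M" using assms(2)[OF x0] by simp
  ultimately show ?thesis by (simp add: abs_le_iff)
qed

lemma abs_SUP_le:
  fixes f :: "'b \<Rightarrow> real"
  assumes "S \<noteq> {}" "\<And>x. x \<in> S \<Longrightarrow> \<bar>f x\<bar> \<le> M"
  shows "\<bar>(SUP x\<in>S. f x)\<bar> \<le> M"
proof -
  have bb: "bdd_above (f ` S)"
  proof (rule bdd_aboveI2)
    fix x assume "x \<in> S" then show "f x \<le> M" using assms(2)[of x] by linarith
  qed
  obtain x0 where x0: "x0 \<in> S" using assms(1) by blast
  have "f x0 \<le> (SUP x\<in>S. f x)" by (rule cSUP_upper[OF x0 bb])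
  moreover have "(SUP x\<in>S. f x) \<le> M" using assms by (intro cSUP_least) (auto simp: abs_le_iff)
  moreover have "-M \<le> f x0" using assms(2)[OF x0] by simp
  ultimately show ?thesis by (simp add: abs_le_iff)
qed

lemma rho_bounded:
  fixes T :: "(real \<Rightarrow> real^'n::finite) set"
  assumes B: "\<forall>\<xi>\<in>T. \<forall>t\<ge>0. norm (\<xi> t) \<le> B" and "wf_stl \<phi>"
  shows "\<exists>M. \<forall>\<xi>\<in>T. \<forall>t\<ge>0. \<bar>rho c \<phi> \<xi> t\<bar> \<le> M"
  using assms(2)
proof (induction \<phi>)
  case TT then show ?case by auto
next
  case (Atom f)
  then have "continuous_on (cball 0 B) f" using continuous_on_subset by auto
  then have "compact (f ` cball 0 B)" by (intro compact_continuous_image) auto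
  then obtain M where M: "\<forall>y\<in>f ` cball 0 B. norm y \<le> M" using compact_imp_bounded bounded_iff by metis
  show ?case
  proof (intro exI ballI allI impI)
    fix \<xi> and t :: real assume "\<xi>\<in>T" "t\<ge>0"
    then have "\<xi> t \<in> cball 0 B" using B by auto
    then show "\<bar>rho c (Atom f) \<xi> t\<bar> \<le> M" using M by auto
  qed
next
  case (Neg \<phi>) then show ?case by auto
next
  case (And \<phi> \<psi>)
  then obtain M1 M2 where M1: "\<forall>\<xi>\<in>T. \<forall>t\<ge>0. \<bar>rho c \<phi> \<xi> t\<bar> \<le> M1"
    and M2: "\<forall>\<xi>\<in>T. \<forall>t\<ge>0. \<bar>rho c \<psi> \<xi> t\<bar> \<le> M2" by auto
  show ?case
  proof (intro exI ballI allI impI)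
    fix \<xi> and t :: real assume "\<xi>\<in>T" "t\<ge>0"
    then have "\<bar>rho c \<phi> \<xi> t\<bar> \<le> M1" "\<bar>rho c \<psi> \<xi> t\<bar> \<le> M2" using M1 M2 by auto
    then show "\<bar>rho c (And \<phi> \<psi>) \<xi> t\<bar> \<le> max M1 M2" by (simp add: abs_le_iff min_def max_def)
  qed
next
  case (Until a b \<phi> \<psi>)
  then obtain M1 M2 where M1: "\<forall>\<xi>\<in>T. \<forall>t\<ge>0. \<bar>rho c \<phi> \<xi> t\<bar> \<le> M1"
    and M2: "\<forall>\<xi>\<in>T. \<forall>t\<ge>0. \<bar>rho c \<psi> \<xi> t\<bar> \<le> M2" by auto
  have ab: "0 \<le> real_of_rat a" "real_of_rat a < real_of_rat b" using Until.prems
    by (simp_all add: of_rat_less)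
  show ?case
  proof (intro exI ballI allI impI)
    fix \<xi> and t :: real assume \<xi>: "\<xi>\<in>T" and t: "t\<ge>0"
    have inner: "\<bar>min (rho c \<psi> \<xi> t') (INF t''\<in>{t..t'}. rho c \<phi> \<xi> t'')\<bar> \<le> max M1 M2"
      if t': "t' \<in> {real_of_rat a + t..real_of_rat b + t}" for t'
    proof -
      have tt: "t \<le> t'"
      proof -
        have h0: "0 \<le> real_of_rat a" by (rule ab(1))
        have "real_of_rat a + t \<le> t'" using t' by simp
        then show ?thesis using h0 by linarith
      qed
      have "\<bar>(INF t''\<in>{t..t'}. rho c \<phi> \<xi> t'')\<bar> \<le> M1"
        by (rule abs_INF_le) (use tt M1 \<xi> t in auto)
      moreover have "\<bar>rho c \<psi> \<xi> t'\<bar> \<le> M2" using M2 \<xi> t tt by auto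
      ultimately show ?thesis by (simp add: abs_le_iff min_def max_def)
    qed
    have "\<bar>rho c (Until a b \<phi> \<psi>) \<xi> t\<bar> \<le> max M1 M2"
      unfolding rho.simps by (rule abs_SUP_le) (use ab inner in auto)
    then show "\<bar>rho c (Until a b \<phi> \<psi>) \<xi> t\<bar> \<le> max M1 M2" .
  qed
qed

definition Jf :: "'b measure \<Rightarrow> real set \<Rightarrow> ('b \<Rightarrow> real \<Rightarrow> real) \<Rightarrow> real" where
  "Jf M I F = (LINT \<xi>|M. set_lebesgue_integral lborel I (F \<xi>))"

definition bnd :: "'b measure \<Rightarrow> real set \<Rightarrow> ('b \<Rightarrow> real \<Rightarrow> real) \<Rightarrow> bool" where
  "bnd M I F \<longleftrightarrow> (\<lambda>(\<xi>,t). F \<xi> t) \<in> borel_measurable (M \<Otimes>\<^sub>M lborel) \<and>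
     (\<exists>C. \<forall>\<xi>\<in>space M. \<forall>t\<in>I. \<bar>F \<xi> t\<bar> \<le> C)"

locale intset = finite_measure M for M :: "'b measure" +
  fixes I :: "real set"
  assumes Isets: "I \<in> sets lborel" and Ifin: "emeasure lborel I < \<infinity>"
begin

lemma inner_int: assumes "bnd M I F" "\<xi> \<in> space M" shows "set_integrable lborel I (F \<xi>)"
proof -
  obtain C where C: "\<forall>\<xi>\<in>space M. \<forall>t\<in>I. \<bar>F \<xi> t\<bar> \<le> C" and mF: "(\<lambda>(\<xi>,t). F \<xi> t) \<in> borel_measurable (M \<Otimes>\<^sub>M lborel)"
    using assms(1) unfolding bnd_def by blast
  have m: "F \<xi> \<in> borel_measurable lborel" using measurable_Pair2[OF mF assms(2)] by simp
  have i: "integrable lborel (\<lambda>t. \<bar>C\<bar> * indicator I t)"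
    using integrable_real_indicator[OF Isets Ifin] by (intro integrable_mult_right)
  show ?thesis unfolding set_integrable_def
  proof (rule Bochner_Integration.integrable_bound[OF i])
    show "(\<lambda>t. indicator I t *\<^sub>R F \<xi> t) \<in> borel_measurable lborel"
      using m Isets by (intro borel_measurable_scaleR borel_measurable_indicator) auto
    show "AE t in lborel. norm (indicator I t *\<^sub>R F \<xi> t) \<le> norm (\<bar>C\<bar> * indicator I t)"
      using C assms(2) by (auto simp: indicator_def intro: order_trans[OF _ abs_ge_self])
  qed
qed

lemma outer_meas: assumes "bnd M I F" shows "(\<lambda>\<xi>. set_lebesgue_integral lborel I (F \<xi>)) \<in> borel_measurable M"
proof -
  have mF[measurable]: "(\<lambda>(\<xi>,t). F \<xi> t) \<in> borel_measurable (M \<Otimes>\<^sub>M lborel)"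
    using assms unfolding bnd_def by blast
  have [measurable]: "I \<in> sets lborel" by (rule Isets)
  have "(\<lambda>(\<xi>,t). indicator I t *\<^sub>R F \<xi> t) \<in> borel_measurable (M \<Otimes>\<^sub>M lborel)"
  proof -
    have "(\<lambda>(\<xi>,t). indicator I t *\<^sub>R F \<xi> t) = (\<lambda>x. indicator I (snd x) *\<^sub>R (\<lambda>(\<xi>,t). F \<xi> t) x)"
      by auto
    also have "\<dots> \<in> borel_measurable (M \<Otimes>\<^sub>M lborel)" by measurable
    finally show ?thesis .
  qed
  then show ?thesis unfolding set_lebesgue_integral_def
    by (rule lborel.borel_measurable_lebesgue_integral)
qed

lemma outer_int: assumes "bnd M I F" shows "integrable M (\<lambda>\<xi>. set_lebesgue_integral lborel I (F \<xi>))"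
proof -
  obtain C where C: "\<forall>\<xi>\<in>space M. \<forall>t\<in>I. \<bar>F \<xi> t\<bar> \<le> C"
    using assms(1) unfolding bnd_def by blast
  have i: "integrable lborel (\<lambda>t. \<bar>C\<bar> * indicator I t)"
    using integrable_real_indicator[OF Isets Ifin] by (intro integrable_mult_right)
  have "norm (set_lebesgue_integral lborel I (F \<xi>)) \<le> \<bar>C\<bar> * measure lborel I" if \<xi>: "\<xi> \<in> space M" for \<xi>
  proof -
    have "norm (set_lebesgue_integral lborel I (F \<xi>)) \<le> (LINT t|lborel. \<bar>C\<bar> * indicator I t)"
      unfolding set_lebesgue_integral_def
    proof (rule order_trans[OF Bochner_Integration.integral_norm_bound Bochner_Integration.integral_mono])
      show "integrable lborel (\<lambda>t. norm (indicator I t *\<^sub>R F \<xi> t))"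
        using inner_int[OF assms \<xi>] unfolding set_integrable_def by (rule integrable_norm)
      show "integrable lborel (\<lambda>t. \<bar>C\<bar> * indicator I t)" by (rule i)
      show "norm (indicator I t *\<^sub>R F \<xi> t) \<le> \<bar>C\<bar> * indicator I t" for t
        using C \<xi> by (auto simp: indicator_def intro: order_trans[OF _ abs_ge_self])
    qed
    also have "\<dots> = \<bar>C\<bar> * measure lborel I" by simp
    finally show ?thesis .
  qed
  then show ?thesis
    by (intro integrable_const_bound[where B="\<bar>C\<bar> * measure lborel I"] outer_meas[OF assms]) auto
qed

lemma J_add: assumes "bnd M I F" "bnd M I G"
  shows "Jf M I (\<lambda>\<xi> t. F \<xi> t + G \<xi> t) = Jf M I F + Jf M I G"
proof -
  have "Jf M I (\<lambda>\<xi> t. F \<xi> t + G \<xi> t) =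
      (LINT \<xi>|M. set_lebesgue_integral lborel I (F \<xi>) + set_lebesgue_integral lborel I (G \<xi>))"
    unfolding Jf_def
  proof (rule Bochner_Integration.integral_cong[OF refl])
    fix \<xi> assume "\<xi> \<in> space M"
    from set_integral_add(2)[OF inner_int[OF assms(1) this] inner_int[OF assms(2) this]]
    show "set_lebesgue_integral lborel I (\<lambda>t. F \<xi> t + G \<xi> t) =
      set_lebesgue_integral lborel I (F \<xi>) + set_lebesgue_integral lborel I (G \<xi>)" by simp
  qed
  also have "\<dots> = Jf M I F + Jf M I G"
    unfolding Jf_def by (intro Bochner_Integration.integral_add outer_int assms)
  finally show ?thesis .
qed

lemma J_scale: "Jf M I (\<lambda>\<xi> t. r * F \<xi> t) = r * Jf M I F"
  unfolding Jf_def by simp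

lemma J_zero: "Jf M I (\<lambda>\<xi> t. 0) = 0"
  unfolding Jf_def set_lebesgue_integral_def by simp

lemma bnd_add: assumes "bnd M I F" "bnd M I G" shows "bnd M I (\<lambda>\<xi> t. F \<xi> t + G \<xi> t)"
proof -
  obtain C1 C2 where C1: "\<forall>\<xi>\<in>space M. \<forall>t\<in>I. \<bar>F \<xi> t\<bar> \<le> C1" and C2: "\<forall>\<xi>\<in>space M. \<forall>t\<in>I. \<bar>G \<xi> t\<bar> \<le> C2"
    using assms unfolding bnd_def by blast
  have m1: "(\<lambda>(\<xi>,t). F \<xi> t) \<in> borel_measurable (M \<Otimes>\<^sub>M lborel)" and m2: "(\<lambda>(\<xi>,t). G \<xi> t) \<in> borel_measurable (M \<Otimes>\<^sub>M lborel)"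
    using assms unfolding bnd_def by blast+
  have "(\<lambda>(\<xi>,t). F \<xi> t + G \<xi> t) = (\<lambda>x. (\<lambda>(\<xi>,t). F \<xi> t) x + (\<lambda>(\<xi>,t). G \<xi> t) x)" by auto
  then have m: "(\<lambda>(\<xi>,t). F \<xi> t + G \<xi> t) \<in> borel_measurable (M \<Otimes>\<^sub>M lborel)"
    using borel_measurable_add[OF m1 m2] by simp
  have "\<forall>\<xi>\<in>space M. \<forall>t\<in>I. \<bar>F \<xi> t + G \<xi> t\<bar> \<le> C1 + C2"
    using C1 C2 by (meson abs_triangle_ineq add_mono order_trans)
  with m show ?thesis unfolding bnd_def by blast
qed

lemma bnd_mult: assumes "bnd M I F" "bnd M I G" shows "bnd M I (\<lambda>\<xi> t. F \<xi> t * G \<xi> t)"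
proof -
  obtain C1 C2 where C1: "\<forall>\<xi>\<in>space M. \<forall>t\<in>I. \<bar>F \<xi> t\<bar> \<le> C1" and C2: "\<forall>\<xi>\<in>space M. \<forall>t\<in>I. \<bar>G \<xi> t\<bar> \<le> C2"
    using assms unfolding bnd_def by blast
  have m1: "(\<lambda>(\<xi>,t). F \<xi> t) \<in> borel_measurable (M \<Otimes>\<^sub>M lborel)" and m2: "(\<lambda>(\<xi>,t). G \<xi> t) \<in> borel_measurable (M \<Otimes>\<^sub>M lborel)"
    using assms unfolding bnd_def by blast+
  have "(\<lambda>(\<xi>,t). F \<xi> t * G \<xi> t) = (\<lambda>x. (\<lambda>(\<xi>,t). F \<xi> t) x * (\<lambda>(\<xi>,t). G \<xi> t) x)" by auto
  then have m: "(\<lambda>(\<xi>,t). F \<xi> t * G \<xi> t) \<in> borel_measurable (M \<Otimes>\<^sub>M lborel)"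
    using borel_measurable_times[OF m1 m2] by simp
  have "\<bar>F \<xi> t * G \<xi> t\<bar> \<le> C1 * C2" if "\<xi>\<in>space M" "t\<in>I" for \<xi> t
    unfolding abs_mult using C1 C2 that by (intro mult_mono) (auto intro: order_trans[OF abs_ge_zero])
  with m show ?thesis unfolding bnd_def by blast
qed

lemma bnd_scale: assumes "bnd M I F" shows "bnd M I (\<lambda>\<xi> t. r * F \<xi> t)"
proof -
  have "bnd M I (\<lambda>\<xi> t. r)" unfolding bnd_def by auto
  from bnd_mult[OF this assms] show ?thesis .
qed

lemma bnd_zero: "bnd M I (\<lambda>\<xi> t. 0)" unfolding bnd_def by auto

lemma psd_family:
  fixes h :: "'a \<Rightarrow> 'b \<Rightarrow> real \<Rightarrow> real"
  assumes hb: "\<And>\<phi>. bnd M I (h \<phi>)"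
  shows "0 \<le> Bk (\<lambda>\<phi> \<psi>. Jf M I (\<lambda>\<xi> t. h \<phi> \<xi> t * h \<psi> \<xi> t)) cs cs"
proof -
  define Kh where "Kh \<phi> \<psi> = Jf M I (\<lambda>\<xi> t. h \<phi> \<xi> t * h \<psi> \<xi> t)" for \<phi> \<psi>
  define G where "G cs \<xi> t = (\<Sum>p\<leftarrow>cs. fst p * h (snd p) \<xi> t)" for cs \<xi> t
  have bG: "bnd M I (G cs)" for cs
  proof (induction cs)
    case Nil then show ?case using bnd_zero by (simp add: G_def)
  next
    case (Cons p cs)
    have "G (p#cs) = (\<lambda>\<xi> t. fst p * h (snd p) \<xi> t + G cs \<xi> t)" by (simp add: G_def fun_eq_iff)
    then show ?case using bnd_add[OF bnd_scale[OF hb] Cons] by simp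
  qed
  have L1: "Jf M I (\<lambda>\<xi> t. F \<xi> t * G ds \<xi> t) = (\<Sum>q\<leftarrow>ds. fst q * Jf M I (\<lambda>\<xi> t. F \<xi> t * h (snd q) \<xi> t))"
    if F: "bnd M I F" for F ds
  proof (induction ds)
    case Nil then show ?case using J_zero by (simp add: G_def)
  next
    case (Cons q ds)
    have "(\<lambda>\<xi> t. F \<xi> t * G (q#ds) \<xi> t) = (\<lambda>\<xi> t. fst q * (F \<xi> t * h (snd q) \<xi> t) + F \<xi> t * G ds \<xi> t)"
      by (simp add: G_def fun_eq_iff algebra_simps)
    then have "Jf M I (\<lambda>\<xi> t. F \<xi> t * G (q#ds) \<xi> t) =
        Jf M I (\<lambda>\<xi> t. fst q * (F \<xi> t * h (snd q) \<xi> t)) + Jf M I (\<lambda>\<xi> t. F \<xi> t * G ds \<xi> t)"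
      using J_add[OF bnd_scale[OF bnd_mult[OF F hb]] bnd_mult[OF F bG]] by simp
    then show ?case using Cons J_scale by simp
  qed
  have L2: "Bk Kh cs ds = Jf M I (\<lambda>\<xi> t. G cs \<xi> t * G ds \<xi> t)" for cs ds
  proof (induction cs)
    case Nil then show ?case using J_zero by (simp add: G_def)
  next
    case (Cons p cs)
    have e1: "Bk Kh (p#cs) ds = (\<Sum>q\<leftarrow>ds. fst p * fst q * Kh (snd p) (snd q)) + Bk Kh cs ds"
      by (simp add: Bk_def)
    have "(\<lambda>\<xi> t. G (p#cs) \<xi> t * G ds \<xi> t) = (\<lambda>\<xi> t. fst p * (h (snd p) \<xi> t * G ds \<xi> t) + G cs \<xi> t * G ds \<xi> t)"
      by (simp add: G_def fun_eq_iff algebra_simps)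
    then have "Jf M I (\<lambda>\<xi> t. G (p#cs) \<xi> t * G ds \<xi> t) =
        fst p * Jf M I (\<lambda>\<xi> t. h (snd p) \<xi> t * G ds \<xi> t) + Jf M I (\<lambda>\<xi> t. G cs \<xi> t * G ds \<xi> t)"
      using J_add[OF bnd_scale[OF bnd_mult[OF hb bG]] bnd_mult[OF bG bG]] J_scale by simp
    also have "Jf M I (\<lambda>\<xi> t. h (snd p) \<xi> t * G ds \<xi> t) = (\<Sum>q\<leftarrow>ds. fst q * Kh (snd p) (snd q))"
      unfolding L1[OF hb] Kh_def ..
    finally have X: "Jf M I (\<lambda>\<xi> t. G (p#cs) \<xi> t * G ds \<xi> t) =
        fst p * (\<Sum>q\<leftarrow>ds. fst q * Kh (snd p) (snd q)) + Jf M I (\<lambda>\<xi> t. G cs \<xi> t * G ds \<xi> t)" .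
    have hp: "(\<Sum>q\<leftarrow>ds. fst p * fst q * Kh (snd p) (snd q)) = fst p * (\<Sum>q\<leftarrow>ds. fst q * Kh (snd p) (snd q))"
      by (induction ds) (simp_all add: algebra_simps)
    show ?case using X e1 hp Cons.IH by linarith
  qed
  have "0 \<le> Jf M I (\<lambda>\<xi> t. G cs \<xi> t * G cs \<xi> t)"
    unfolding Jf_def set_lebesgue_integral_def by (intro Bochner_Integration.integral_nonneg) (simp add: indicator_def)
  then show ?thesis using L2 unfolding Kh_def by simp
qed

end

theorem theorem1:
  fixes T :: "(real \<Rightarrow> real^'n) set"
    and \<mu>0 :: "(real \<Rightarrow> real^'n) measure"
    and I :: "real set"
    and c :: real
  assumes "c > 0"
    and "\<forall>\<xi>\<in>T. continuous_on {0..} \<xi>"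
    and "\<exists>B. \<forall>\<xi>\<in>T. \<forall>t\<ge>0. norm (\<xi> t) \<le> B"
    and "is_interval I" and "bounded I" and "I \<subseteq> {0..}"
    and "prob_space \<mu>0" and "space \<mu>0 = T"
    and "\<forall>\<phi>. wf_stl \<phi> \<longrightarrow>
           (\<lambda>(\<xi>, t). rho c \<phi> \<xi> t) \<in> borel_measurable (\<mu>0 \<Otimes>\<^sub>M lborel)"
  shows "\<exists>(H :: ('n stl \<Rightarrow> real) set) ip (\<Phi> :: 'n stl \<Rightarrow> ('n stl \<Rightarrow> real)).
           hilbert_space_on H ip \<and>
           (\<forall>\<phi>. wf_stl \<phi> \<longrightarrow> \<Phi> \<phi> \<in> H) \<and>
           (\<forall>\<phi> \<psi>. wf_stl \<phi> \<longrightarrow> wf_stl \<psi> \<longrightarrow>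
              stl_kernel c I \<mu>0 \<phi> \<psi> = ip (\<Phi> \<phi>) (\<Phi> \<psi>))"
proof -
  obtain B where B: "\<forall>\<xi>\<in>T. \<forall>t\<ge>0. norm (\<xi> t) \<le> B" using assms(3) by blast
  interpret P: prob_space \<mu>0 by (rule assms(7))
  have Isets: "I \<in> sets lborel" using real_interval_borel_measurable[OF assms(4)] by simp
  have Ifin: "emeasure lborel I < \<infinity>" by (rule emeasure_bounded_finite[OF assms(5)])
  interpret J: intset \<mu>0 I
    by (intro intset.intro intset_axioms.intro P.finite_measure_axioms Isets Ifin)
  define g :: "'n stl \<Rightarrow> (real \<Rightarrow> real^'n) \<Rightarrow> real \<Rightarrow> real"
    where "g \<phi> \<xi> t = (if wf_stl \<phi> then rho c \<phi> \<xi> t else 0)" for \<phi> \<xi> t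
  have gb: "bnd \<mu>0 I (g \<phi>)" for \<phi>
  proof (cases "wf_stl \<phi>")
    case True
    obtain M where M: "\<forall>\<xi>\<in>T. \<forall>t\<ge>0. \<bar>rho c \<phi> \<xi> t\<bar> \<le> M" using rho_bounded[OF B True] by blast
    have ge: "g \<phi> = (\<lambda>\<xi> t. rho c \<phi> \<xi> t)" using True by (simp add: g_def fun_eq_iff)
    have m: "(\<lambda>(\<xi>,t). rho c \<phi> \<xi> t) \<in> borel_measurable (\<mu>0 \<Otimes>\<^sub>M lborel)" using assms(9) True by blast
    have "\<forall>\<xi>\<in>space \<mu>0. \<forall>t\<in>I. \<bar>rho c \<phi> \<xi> t\<bar> \<le> M" using M assms(6,8) by auto
    with m show ?thesis unfolding ge bnd_def by blast
  next
    case False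
    then have "g \<phi> = (\<lambda>\<xi> t. 0)" by (simp add: g_def fun_eq_iff)
    then show ?thesis using J.bnd_zero by simp
  qed
  define K' where "K' \<phi> \<psi> = Jf \<mu>0 I (\<lambda>\<xi> t. g \<phi> \<xi> t * g \<psi> \<xi> t)" for \<phi> \<psi>
  have pd: "pdk K'"
  proof
    show "K' x y = K' y x" for x y by (simp add: K'_def mult.commute)
    show "0 \<le> Bk K' cs cs" for cs unfolding K'_def by (rule J.psd_family[OF gb])
  qed
  obtain H :: "('n stl \<Rightarrow> real) set" and ip and \<Phi> :: "'n stl \<Rightarrow> 'n stl \<Rightarrow> real" where all: "hilbert_space_on H ip \<and> (\<forall>x. \<Phi> x \<in> H) \<and> (\<forall>x y. K' x y = ip (\<Phi> x) (\<Phi> y))"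
    using pdk.rkhs[OF pd] by blast
  then have hs: "hilbert_space_on H ip" and \<Phi>H: "\<forall>x. \<Phi> x \<in> H"
    and ker: "\<forall>x y. K' x y = ip (\<Phi> x) (\<Phi> y)" by blast+
  show ?thesis
  proof (intro exI conjI allI impI)
    show "hilbert_space_on H ip" by (rule hs)
    show "\<Phi> \<phi> \<in> H" for \<phi> using \<Phi>H by blast
    fix \<phi> \<psi> :: "'n stl" assume w: "wf_stl \<phi>" "wf_stl \<psi>"
    have "stl_kernel c I \<mu>0 \<phi> \<psi> = K' \<phi> \<psi>"
      unfolding K'_def Jf_def stl_kernel_def g_def using w by simp
    then show "stl_kernel c I \<mu>0 \<phi> \<psi> = ip (\<Phi> \<phi>) (\<Phi> \<psi>)" using ker by simp
  qed
qed

end
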